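(* Let $R$ be a mixed characteristic dp-minimal DVR and let $S$ be a finite-index subring of $R$. Then $S$ is dp-minimal and Noetherian.
   Context: Rings are commutative and unital; a ring is dp-minimal if $(R,+,\cdot)$ has dp-rank $1$. A DVR is a discrete valuation ring; a dp-minimal DVR has fraction field of characteristic $0$, and it is called mixed characteristic if its residue field is finite. A finite-index subring of $R$ is a subring $S\subseteq R$ of finite index in the additive group $(R,+)$. *)

theory Defs
  imports "HOL-Algebra.Algebra"
begin

datatype rterm = RVar nat | RZero | ROne | RAdd rterm rterm | RMul rterm rterm | RNeg rterm

datatype rform = REq rterm rterm | RNot rform | RAnd rform rform | ROr rform rform
  | RExists nat rform | RForall nat rform

fun rterm_eval :: "('a, 'b) ring_scheme \<Rightarrow> (nat \<Rightarrow> 'a) \<Rightarrow> rterm \<Rightarrow> 'a" where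
  "rterm_eval R e (RVar k) = e k"
| "rterm_eval R e RZero = \<zero>\<^bsub>R\<^esub>"
| "rterm_eval R e ROne = \<one>\<^bsub>R\<^esub>"
| "rterm_eval R e (RAdd s t) = rterm_eval R e s \<oplus>\<^bsub>R\<^esub> rterm_eval R e t"
| "rterm_eval R e (RMul s t) = rterm_eval R e s \<otimes>\<^bsub>R\<^esub> rterm_eval R e t"
| "rterm_eval R e (RNeg s) = \<ominus>\<^bsub>R\<^esub> rterm_eval R e s"

fun rsat :: "('a, 'b) ring_scheme \<Rightarrow> (nat \<Rightarrow> 'a) \<Rightarrow> rform \<Rightarrow> bool" where
  "rsat R e (REq s t) = (rterm_eval R e s = rterm_eval R e t)"
| "rsat R e (RNot f) = (\<not> rsat R e f)"
| "rsat R e (RAnd f g) = (rsat R e f \<and> rsat R e g)"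
| "rsat R e (ROr f g) = (rsat R e f \<or> rsat R e g)"
| "rsat R e (RExists k f) = (\<exists>a\<in>carrier R. rsat R (e(k := a)) f)"
| "rsat R e (RForall k f) = (\<forall>a\<in>carrier R. rsat R (e(k := a)) f)"

text \<open>An ICT pattern of depth 2 for the singleton variable x (= variable 0), with formulas
  phi(x;y), psi(x;z) whose remaining free variables are parameters. By compactness, such a
  pattern exists in the monster model iff for every n a finite n-by-n pattern exists in the
  structure itself; we use this finitary formulation.\<close>
definition ict2 :: "('a, 'b) ring_scheme \<Rightarrow> bool" where
  "ict2 R \<longleftrightarrow> (\<exists>\<phi> \<psi>. \<forall>n::nat. \<exists>A B :: nat \<Rightarrow> nat \<Rightarrow> 'a.
      (\<forall>i<n. \<forall>k. A i k \<in> carrier R) \<and> (\<forall>j<n. \<forall>k. B j k \<in> carrier R) \<and>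
      (\<forall>i<n. \<forall>j<n. \<exists>c\<in>carrier R. \<forall>i'<n. \<forall>j'<n.
          (rsat R ((A i')(0 := c)) \<phi> \<longleftrightarrow> i' = i) \<and>
          (rsat R ((B j')(0 := c)) \<psi> \<longleftrightarrow> j' = j)))"

text \<open>dp-rank 1: no ICT pattern of depth 2, and (infinite universe, i.e.) dp-rank not 0.\<close>
definition dp_minimal :: "('a, 'b) ring_scheme \<Rightarrow> bool" where
  "dp_minimal R \<longleftrightarrow> infinite (carrier R) \<and> \<not> ict2 R"

definition DVR :: "('a, 'b) ring_scheme \<Rightarrow> bool" where
  "DVR R \<longleftrightarrow> principal_domain R \<and> \<not> field R \<and> (\<exists>!m. maximalideal m R)"

definition mixed_char_DVR :: "('a, 'b) ring_scheme \<Rightarrow> bool" where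
  "mixed_char_DVR R \<longleftrightarrow> DVR R \<and> (\<forall>m. maximalideal m R \<longrightarrow> finite (a_rcosets\<^bsub>R\<^esub> m))"

definition finite_index_subring :: "'a set \<Rightarrow> ('a, 'b) ring_scheme \<Rightarrow> bool" where
  "finite_index_subring S R \<longleftrightarrow> subring S R \<and> finite (a_rcosets\<^bsub>R\<^esub> S)"

end

theory Submission
  imports Defs
begin

definition fin_trans :: "('a,'b) ring_scheme \<Rightarrow> 'a set \<Rightarrow> bool" where
  "fin_trans R H \<longleftrightarrow> (\<exists>F. finite F \<and> F \<subseteq> carrier R \<and> (\<forall>r\<in>carrier R. \<exists>f\<in>F. r \<ominus>\<^bsub>R\<^esub> f \<in> H))"

context ring begin

lemma rcosets_fin_trans:
  assumes "H \<subseteq> carrier R" "\<zero> \<in> H" "finite (a_rcosets H)"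
  shows "fin_trans R H"
proof -
  define ch where "ch C = (SOME a. a \<in> carrier R \<and> C = H +> a)" for C
  have ch: "ch (H +> r) \<in> carrier R \<and> H +> ch (H +> r) = H +> r" if "r \<in> carrier R" for r
  proof -
    have "\<exists>a. a \<in> carrier R \<and> H +> r = H +> a" using that by blast
    from someI_ex[OF this] show ?thesis unfolding ch_def by simp
  qed
  show ?thesis unfolding fin_trans_def
  proof (intro exI conjI ballI)
    show "finite (ch ` (a_rcosets H))" using assms(3) by simp
    show "ch ` (a_rcosets H) \<subseteq> carrier R"
      using ch by (auto simp: A_RCOSETS_def RCOSETS_def a_r_coset_def[symmetric])
  next
    fix r assume r: "r \<in> carrier R"
    have Hr: "H +> r \<in> a_rcosets H" using r by (auto simp: A_RCOSETS_def RCOSETS_def a_r_coset_def[symmetric])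
    let ?f = "ch (H +> r)"
    have "r \<in> H +> ?f" using ch[OF r] assms(2) r by (force simp: a_r_coset_def r_coset_def)
    then obtain h where h: "h \<in> H" "r = h \<oplus> ?f" by (auto simp: a_r_coset_def r_coset_def)
    have fc: "?f \<in> carrier R" using ch[OF r] by blast
    have hc: "h \<in> carrier R" using h assms(1) by blast
    have "(h \<oplus> ?f) \<ominus> ?f = h" using fc hc by algebra
    hence "r \<ominus> ?f = h" using h(2) by simp
    thus "\<exists>f\<in>ch ` (a_rcosets H). r \<ominus> f \<in> H" using Hr h by blast
  qed
qed

lemma fin_trans_infinite:
  assumes "fin_trans R H" "H \<subseteq> carrier R" "infinite (carrier R)"
  shows "infinite H"
proof
  assume fH: "finite H"
  obtain F where F: "finite F" "F \<subseteq> carrier R" "\<forall>r\<in>carrier R. \<exists>f\<in>F. r \<ominus> f \<in> H"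
    using assms(1) unfolding fin_trans_def by blast
  have "carrier R \<subseteq> (\<lambda>(h,f). h \<oplus> f) ` (H \<times> F)"
  proof
    fix r assume r: "r \<in> carrier R"
    then obtain f where f: "f \<in> F" "r \<ominus> f \<in> H" using F by blast
    have fc: "f \<in> carrier R" using f F(2) by blast
    have "r = (r \<ominus> f) \<oplus> f" using r fc by algebra
    thus "r \<in> (\<lambda>(h,f). h \<oplus> f) ` (H \<times> F)" using f by force
  qed
  moreover have "finite ((\<lambda>(h,f). h \<oplus> f) ` (H \<times> F))" using fH F(1) by simp
  ultimately show False using assms(3) finite_subset by blast
qed

lemma subring_minus: assumes "subring S R" "a \<in> S" "b \<in> S" shows "a \<ominus> b \<in> S"
  using subringE(5)[OF assms(1) assms(3)] subringE(7)[OF assms(1) assms(2)] by (simp add: a_minus_def)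

end

context cring begin

lemma conductor:
  assumes sub: "subring S R" and ft: "fin_trans R S"
  defines "I \<equiv> {r \<in> carrier R. \<forall>x\<in>carrier R. r \<otimes> x \<in> S}"
  shows "ideal I R" "I \<subseteq> S" "fin_trans R I"
proof -
  have Sc: "S \<subseteq> carrier R" using subringE(1)[OF sub] .
  show "I \<subseteq> S"
  proof
    fix r assume "r \<in> I"
    hence "r \<in> carrier R" "\<forall>x\<in>carrier R. r \<otimes> x \<in> S" unfolding I_def by auto
    hence "r \<otimes> \<one> \<in> S" by blast
    thus "r \<in> S" using \<open>r \<in> carrier R\<close> by simp
  qed
  show "ideal I R"
  proof (rule idealI)
    show "ring R" by (rule ring_axioms)
    show "subgroup I (add_monoid R)"
    proof (rule add.subgroupI)
      show "I \<subseteq> carrier R" unfolding I_def by blast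
      show "I \<noteq> {}"
      proof -
        have "\<zero> \<in> I" unfolding I_def using subringE(2)[OF sub] by auto
        thus ?thesis by blast
      qed
      fix a b assume a: "a \<in> I" and b: "b \<in> I"
      show "\<ominus> a \<in> I" unfolding I_def
      proof (intro CollectI conjI ballI)
        show "\<ominus> a \<in> carrier R" using a unfolding I_def by blast
        fix x assume x: "x \<in> carrier R"
        have "\<ominus> a \<otimes> x = \<ominus> (a \<otimes> x)" using a x unfolding I_def by (simp add: l_minus)
        thus "\<ominus> a \<otimes> x \<in> S" using a x subringE(5)[OF sub] unfolding I_def by auto
      qed
      show "a \<oplus> b \<in> I" unfolding I_def
      proof (intro CollectI conjI ballI)
        show "a \<oplus> b \<in> carrier R" using a b unfolding I_def by blast
        fix x assume x: "x \<in> carrier R"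
        have "(a \<oplus> b) \<otimes> x = a \<otimes> x \<oplus> b \<otimes> x" using a b x unfolding I_def by (simp add: l_distr)
        thus "(a \<oplus> b) \<otimes> x \<in> S" using a b x subringE(7)[OF sub] unfolding I_def by auto
      qed
    qed
    fix a x assume a: "a \<in> I" and x: "x \<in> carrier R"
    show "a \<otimes> x \<in> I" unfolding I_def
    proof (intro CollectI conjI ballI)
      show "a \<otimes> x \<in> carrier R" using a x unfolding I_def by blast
      fix y assume y: "y \<in> carrier R"
      have "a \<otimes> x \<otimes> y = a \<otimes> (x \<otimes> y)" using a x y unfolding I_def by (simp add: m_assoc)
      thus "a \<otimes> x \<otimes> y \<in> S" using a x y unfolding I_def by auto
    qed
    show "x \<otimes> a \<in> I" unfolding I_def
    proof (intro CollectI conjI ballI)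
      show "x \<otimes> a \<in> carrier R" using a x unfolding I_def by blast
      fix y assume y: "y \<in> carrier R"
      have "x \<otimes> a \<otimes> y = a \<otimes> (x \<otimes> y)" using a x y unfolding I_def by (simp add: m_assoc m_comm m_lcomm)
      thus "x \<otimes> a \<otimes> y \<in> S" using a x y unfolding I_def by auto
    qed
  qed
  obtain T where T: "finite T" "T \<subseteq> carrier R" "\<forall>r\<in>carrier R. \<exists>f\<in>T. r \<ominus> f \<in> S"
    using ft unfolding fin_trans_def by blast
  define g where "g x = (SOME f. f \<in> T \<and> x \<ominus> f \<in> S)" for x
  have g: "g x \<in> T \<and> x \<ominus> g x \<in> S" if "x \<in> carrier R" for x
  proof -
    have "\<exists>f. f \<in> T \<and> x \<ominus> f \<in> S" using T(3) that by blast
    from someI_ex[OF this] show ?thesis unfolding g_def .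
  qed
  define \<sigma> where "\<sigma> r = restrict (\<lambda>t. g (r \<otimes> t)) (insert \<one> T)" for r
  have \<sigma>fin: "finite (\<sigma> ` carrier R)"
  proof (rule finite_subset)
    show "\<sigma> ` carrier R \<subseteq> PiE (insert \<one> T) (\<lambda>_. T)"
      unfolding \<sigma>_def using g T(2) by (auto simp: PiE_def)
    show "finite (PiE (insert \<one> T) (\<lambda>_. T))" using T(1) by (simp add: finite_PiE)
  qed
  define ch where "ch v = (SOME r. r \<in> carrier R \<and> \<sigma> r = v)" for v
  have ch: "ch (\<sigma> r) \<in> carrier R \<and> \<sigma> (ch (\<sigma> r)) = \<sigma> r" if "r \<in> carrier R" for r
  proof -
    have "\<exists>r'. r' \<in> carrier R \<and> \<sigma> r' = \<sigma> r" using that by blast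
    from someI_ex[OF this] show ?thesis unfolding ch_def .
  qed
  have key: "r \<ominus> r' \<in> I" if r: "r \<in> carrier R" and r': "r' \<in> carrier R" and eq: "\<sigma> r' = \<sigma> r" for r r'
  proof -
    have tS: "(r \<ominus> r') \<otimes> t \<in> S" if t: "t \<in> insert \<one> T" for t
    proof -
      have tc: "t \<in> carrier R" using t T(2) by blast
      have "g (r \<otimes> t) = g (r' \<otimes> t)" using fun_cong[OF eq, of t] t unfolding \<sigma>_def by simp
      moreover have "r \<otimes> t \<ominus> g (r \<otimes> t) \<in> S" "r' \<otimes> t \<ominus> g (r' \<otimes> t) \<in> S"
        using g r r' tc by auto
      ultimately have "(r \<otimes> t \<ominus> g (r \<otimes> t)) \<ominus> (r' \<otimes> t \<ominus> g (r \<otimes> t)) \<in> S"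
        using subring_minus[OF sub] by simp
      moreover have gc: "g (r \<otimes> t) \<in> carrier R" using g[of "r \<otimes> t"] r tc T(2) by blast
      have "\<And>G. G \<in> carrier R \<Longrightarrow> (r \<otimes> t \<ominus> G) \<ominus> (r' \<otimes> t \<ominus> G) = (r \<ominus> r') \<otimes> t"
        using r r' tc by algebra
      ultimately show ?thesis using gc by simp
    qed
    show ?thesis unfolding I_def
    proof (intro CollectI conjI ballI)
      show "r \<ominus> r' \<in> carrier R" using r r' by simp
      fix x assume x: "x \<in> carrier R"
      obtain t where t: "t \<in> T" "x \<ominus> t \<in> S" using T(3) x by blast
      have tc: "t \<in> carrier R" using t T(2) by blast
      have "(r \<ominus> r') \<otimes> x = (r \<ominus> r') \<otimes> t \<oplus> ((r \<ominus> r') \<otimes> \<one>) \<otimes> (x \<ominus> t)"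
        using r r' x tc by algebra
      moreover have "(r \<ominus> r') \<otimes> t \<in> S" "(r \<ominus> r') \<otimes> \<one> \<in> S" using tS t by auto
      ultimately show "(r \<ominus> r') \<otimes> x \<in> S" using subringE(6)[OF sub, of "(r \<ominus> r') \<otimes> \<one>" "x \<ominus> t"] subringE(7)[OF sub] t(2) by simp
    qed
  qed
  show "fin_trans R I" unfolding fin_trans_def
  proof (intro exI conjI ballI)
    show "finite (ch ` (\<sigma> ` carrier R))" using \<sigma>fin by simp
    show "ch ` (\<sigma> ` carrier R) \<subseteq> carrier R" using ch by auto
    fix r assume r: "r \<in> carrier R"
    show "\<exists>f\<in>ch ` (\<sigma> ` carrier R). r \<ominus> f \<in> I"
      using key[OF r, of "ch (\<sigma> r)"] ch[OF r] r by blast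
  qed
qed

end

context cring begin

lemma fin_trans_PIdl_unit:
  assumes u: "u \<in> Units R" shows "fin_trans R (PIdl u)"
  unfolding fin_trans_def
proof (intro exI conjI ballI)
  show "finite {\<zero>}" "{\<zero>} \<subseteq> carrier R" by auto
  fix r assume r: "r \<in> carrier R"
  have uc: "u \<in> carrier R" "inv u \<in> carrier R" using u by auto
  have "r \<ominus> \<zero> = (r \<otimes> inv u) \<otimes> u" using r uc u by (simp add: m_assoc Units_l_inv m_comm[of "inv u" u] a_minus_def)
  moreover have "r \<otimes> inv u \<in> carrier R" using r uc by simp
  ultimately have "r \<ominus> \<zero> \<in> PIdl u" unfolding cgenideal_def by blast
  thus "\<exists>f\<in>{\<zero>}. r \<ominus> f \<in> PIdl u" by blast
qed

lemma fin_trans_PIdl_mult: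
  assumes y: "y \<in> carrier R" and z: "z \<in> carrier R"
    and fy: "fin_trans R (PIdl y)" and fz: "fin_trans R (PIdl z)"
  shows "fin_trans R (PIdl (y \<otimes> z))"
proof -
  obtain Fy where Fy: "finite Fy" "Fy \<subseteq> carrier R" "\<forall>r\<in>carrier R. \<exists>f\<in>Fy. r \<ominus> f \<in> PIdl y"
    using fy unfolding fin_trans_def by blast
  obtain Fz where Fz: "finite Fz" "Fz \<subseteq> carrier R" "\<forall>r\<in>carrier R. \<exists>f\<in>Fz. r \<ominus> f \<in> PIdl z"
    using fz unfolding fin_trans_def by blast
  show ?thesis unfolding fin_trans_def
  proof (intro exI conjI ballI)
    show "finite ((\<lambda>(f,g). f \<oplus> y \<otimes> g) ` (Fy \<times> Fz))" using Fy(1) Fz(1) by simp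
    show "(\<lambda>(f,g). f \<oplus> y \<otimes> g) ` (Fy \<times> Fz) \<subseteq> carrier R" using Fy(2) Fz(2) y by auto
    fix r assume r: "r \<in> carrier R"
    obtain f where f: "f \<in> Fy" "r \<ominus> f \<in> PIdl y" using Fy(3) r by blast
    then obtain s where s: "s \<in> carrier R" "r \<ominus> f = s \<otimes> y" unfolding cgenideal_def by blast
    obtain g where g: "g \<in> Fz" "s \<ominus> g \<in> PIdl z" using Fz(3) s by blast
    then obtain u where u: "u \<in> carrier R" "s \<ominus> g = u \<otimes> z" unfolding cgenideal_def by blast
    have fc: "f \<in> carrier R" and gc: "g \<in> carrier R" using f g Fy Fz by auto
    have r1: "r = (r \<ominus> f) \<oplus> f" using r fc by algebra
    have s1: "s = (s \<ominus> g) \<oplus> g" using s gc by algebra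
    have "r = s \<otimes> y \<oplus> f" using r1 s(2) by simp
    also have "\<dots> = (u \<otimes> z \<oplus> g) \<otimes> y \<oplus> f" using s1 u(2) by simp
    finally have "r \<ominus> (f \<oplus> y \<otimes> g) = ((u \<otimes> z \<oplus> g) \<otimes> y \<oplus> f) \<ominus> (f \<oplus> y \<otimes> g)" by simp
    also have "\<dots> = u \<otimes> (y \<otimes> z)" using u(1) y z fc gc by algebra
    finally have "r \<ominus> (f \<oplus> y \<otimes> g) \<in> PIdl (y \<otimes> z)" using u(1) unfolding cgenideal_def by blast
    thus "\<exists>h\<in>(\<lambda>(f,g). f \<oplus> y \<otimes> g) ` (Fy \<times> Fz). r \<ominus> h \<in> PIdl (y \<otimes> z)" using f g by force
  qed
qed

end

context principal_domain begin

lemma fin_trans_PIdl: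
  assumes mx: "\<And>m. maximalideal m R \<Longrightarrow> fin_trans R m"
    and a: "a \<in> carrier R" "a \<noteq> \<zero>"
  shows "fin_trans R (PIdl a)"
proof (cases "a \<in> Units R")
  case True thus ?thesis by (rule fin_trans_PIdl_unit)
next
  case False
  obtain fs where fs: "set fs \<subseteq> carrier (mult_of R)" "wfactors (mult_of R) fs a"
    using factorization_property[of a] a False by blast
  have irr: "\<forall>x\<in>set fs. irreducible (mult_of R) x" using fs(2) unfolding wfactors_def by blast
  have gen: "set xs \<subseteq> carrier R - {\<zero>} \<Longrightarrow> (\<forall>x\<in>set xs. irreducible (mult_of R) x) \<Longrightarrow>
      foldr (\<otimes>) xs \<one> \<in> carrier R \<and> fin_trans R (PIdl (foldr (\<otimes>) xs \<one>))" for xs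
  proof (induction xs)
    case Nil thus ?case using fin_trans_PIdl_unit[of \<one>] by simp
  next
    case (Cons x xs)
    have xc: "x \<in> carrier R - {\<zero>}" and xi: "irreducible (mult_of R) x" using Cons.prems by auto
    have "ring_irreducible x" using ring_irreducibleI'[OF xc xi] .
    hence "maximalideal (PIdl x) R" using irreducible_imp_maximalideal xc by blast
    hence "fin_trans R (PIdl x)" by (rule mx)
    moreover have "foldr (\<otimes>) xs \<one> \<in> carrier R \<and> fin_trans R (PIdl (foldr (\<otimes>) xs \<one>))"
      using Cons by auto
    ultimately show ?case using fin_trans_PIdl_mult[of x "foldr (\<otimes>) xs \<one>"] xc by simp
  qed
  have fsc: "set fs \<subseteq> carrier R - {\<zero>}" using fs(1) by simp
  have P: "foldr (\<otimes>) fs \<one> \<in> carrier R" "fin_trans R (PIdl (foldr (\<otimes>) fs \<one>))"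
    using gen[OF fsc irr] by auto
  have "foldr (\<otimes>\<^bsub>mult_of R\<^esub>) fs \<one>\<^bsub>mult_of R\<^esub> \<sim>\<^bsub>mult_of R\<^esub> a" using fs(2) unfolding wfactors_def by blast
  moreover have "foldr (\<otimes>\<^bsub>mult_of R\<^esub>) fs \<one>\<^bsub>mult_of R\<^esub> = foldr (\<otimes>) fs \<one>" by (simp add: mult_of_def)
  ultimately have "foldr (\<otimes>) fs \<one> \<sim> a" using assoc_iff_assoc_mult[OF P(1) a(1)] by simp
  hence "PIdl (foldr (\<otimes>) fs \<one>) = PIdl a" using associated_iff_same_ideal[OF P(1) a(1)] by simp
  thus ?thesis using P(2) by simp
qed

end


fun mvt :: "rterm \<Rightarrow> nat" where
  "mvt (RVar k) = k"
| "mvt RZero = 0"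
| "mvt ROne = 0"
| "mvt (RAdd s t) = max (mvt s) (mvt t)"
| "mvt (RMul s t) = max (mvt s) (mvt t)"
| "mvt (RNeg s) = mvt s"

fun mvf :: "rform \<Rightarrow> nat" where
  "mvf (REq s t) = max (mvt s) (mvt t)"
| "mvf (RNot f) = mvf f"
| "mvf (RAnd f g) = max (mvf f) (mvf g)"
| "mvf (ROr f g) = max (mvf f) (mvf g)"
| "mvf (RExists k f) = max k (mvf f)"
| "mvf (RForall k f) = max k (mvf f)"

fun rdisj :: "rform list \<Rightarrow> rform" where
  "rdisj [] = RNot (REq RZero RZero)"
| "rdisj (f # fs) = ROr f (rdisj fs)"

lemma rsat_rdisj: "rsat R e (rdisj fs) \<longleftrightarrow> (\<exists>f\<in>set fs. rsat R e f)"
  by (induction fs) auto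

fun rrel :: "(nat \<Rightarrow> rform) \<Rightarrow> rform \<Rightarrow> rform" where
  "rrel \<theta> (REq s t) = REq s t"
| "rrel \<theta> (RNot f) = RNot (rrel \<theta> f)"
| "rrel \<theta> (RAnd f g) = RAnd (rrel \<theta> f) (rrel \<theta> g)"
| "rrel \<theta> (ROr f g) = ROr (rrel \<theta> f) (rrel \<theta> g)"
| "rrel \<theta> (RExists k f) = RExists k (RAnd (\<theta> k) (rrel \<theta> f))"
| "rrel \<theta> (RForall k f) = RForall k (ROr (RNot (\<theta> k)) (rrel \<theta> f))"

lemma a_inv_sub:
  assumes "ring R" "subring S R" "v \<in> S"
  shows "\<ominus>\<^bsub>R\<lparr>carrier := S\<rparr>\<^esub> v = \<ominus>\<^bsub>R\<^esub> v"
proof -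
  interpret R: ring R by fact
  interpret S: ring "R\<lparr>carrier := S\<rparr>" using R.subring_is_ring[OF assms(2)] .
  have Sc: "S \<subseteq> carrier R" using subringE(1)[OF assms(2)] .
  have "\<ominus>\<^bsub>R\<^esub> v \<in> S" using subringE(5)[OF assms(2) assms(3)] .
  moreover have "\<ominus>\<^bsub>R\<^esub> v \<oplus>\<^bsub>R\<^esub> v = \<zero>\<^bsub>R\<^esub>" using assms(3) Sc by (simp add: R.l_neg subsetD)
  ultimately show ?thesis using S.minus_equality[of "\<ominus>\<^bsub>R\<^esub> v" v] assms(3) by simp
qed

lemma term_sub:
  assumes "ring R" "subring S R" "\<forall>x. e x \<in> S" "\<forall>x\<le>mvt t. e' x = e x"
  shows "rterm_eval (R\<lparr>carrier := S\<rparr>) e t = rterm_eval R e' t \<and> rterm_eval R e' t \<in> S"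
  using assms(4)
proof (induction t)
  case (RVar k) thus ?case using assms(3) by simp
next
  case RZero thus ?case using subringE(2)[OF assms(2)] by simp
next
  case ROne thus ?case using subringE(3)[OF assms(2)] by simp
next
  case (RAdd s t) thus ?case using subringE(7)[OF assms(2)] by simp
next
  case (RMul s t) thus ?case using subringE(6)[OF assms(2)] by simp
next
  case (RNeg s) thus ?case using subringE(5)[OF assms(2)] a_inv_sub[OF assms(1,2)] by simp
qed

lemma form_sub:
  assumes R: "ring R" and sub: "subring S R"
    and \<theta>: "\<And>e k. k < N \<Longrightarrow> (\<forall>x\<ge>N. e x = P x) \<Longrightarrow> e k \<in> carrier R \<Longrightarrow> (rsat R e (\<theta> k) \<longleftrightarrow> e k \<in> S)"
  shows "mvf f < N \<Longrightarrow> \<forall>x. e x \<in> S \<Longrightarrow> \<forall>x<N. e' x = e x \<Longrightarrow> \<forall>x\<ge>N. e' x = P x \<Longrightarrow> \<forall>x. e' x \<in> carrier R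
     \<Longrightarrow> rsat (R\<lparr>carrier := S\<rparr>) e f \<longleftrightarrow> rsat R e' (rrel \<theta> f)"
proof (induction f arbitrary: e e')
  case (REq s t)
  have "\<forall>x\<le>mvt s. e' x = e x" "\<forall>x\<le>mvt t. e' x = e x" using REq by auto
  thus ?case using term_sub[OF R sub REq(2)] by simp
next
  case (RNot f) thus ?case by simp
next
  case (RAnd f g) thus ?case by simp
next
  case (ROr f g) thus ?case by simp
next
  case (RExists k f)
  have Sc: "S \<subseteq> carrier R" using subringE(1)[OF sub] .
  have kN: "k < N" using RExists.prems(1) by simp
  have th: "rsat R (e'(k := a)) (\<theta> k) \<longleftrightarrow> a \<in> S" if "a \<in> carrier R" for a
    using \<theta>[of k "e'(k := a)"] kN that RExists.prems(4) by auto
  have ih: "rsat (R\<lparr>carrier := S\<rparr>) (e(k := a)) f \<longleftrightarrow> rsat R (e'(k := a)) (rrel \<theta> f)" if "a \<in> S" for a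
    apply (rule RExists.IH) using RExists.prems that Sc by auto
  show ?case using th ih Sc by (auto simp del: fun_upd_apply)
next
  case (RForall k f)
  have Sc: "S \<subseteq> carrier R" using subringE(1)[OF sub] .
  have kN: "k < N" using RForall.prems(1) by simp
  have th: "rsat R (e'(k := a)) (\<theta> k) \<longleftrightarrow> a \<in> S" if "a \<in> carrier R" for a
    using \<theta>[of k "e'(k := a)"] kN that RForall.prems(4) by auto
  have ih: "rsat (R\<lparr>carrier := S\<rparr>) (e(k := a)) f \<longleftrightarrow> rsat R (e'(k := a)) (rrel \<theta> f)" if "a \<in> S" for a
    apply (rule RForall.IH) using RForall.prems that Sc by auto
  show ?case using th ih Sc by (auto simp del: fun_upd_apply)
qed




context ring begin

lemma ict2_transfer:
  assumes sub: "subring S R" and p: "p \<in> carrier R"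
    and F': "finite F'" "F' \<subseteq> S"
    and Sdef: "\<forall>x\<in>carrier R. x \<in> S \<longleftrightarrow> (\<exists>f\<in>F'. \<exists>y\<in>carrier R. x = f \<oplus>\<^bsub>R\<^esub> y \<otimes>\<^bsub>R\<^esub> p)"
    and ict: "ict2 (R\<lparr>carrier := S\<rparr>)"
  shows "ict2 R"
proof -
  have Sc: "S \<subseteq> carrier R" using subringE(1)[OF sub] .
  obtain fs where fs: "set fs = F'" using finite_list[OF F'(1)] by blast
  define m where "m = length fs"
  define Q where "Q \<phi> \<psi> n A B \<longleftrightarrow> (\<forall>i<n. \<forall>k. A i k \<in> carrier (R\<lparr>carrier := S\<rparr>)) \<and> (\<forall>j<n. \<forall>k. B j k \<in> carrier (R\<lparr>carrier := S\<rparr>)) \<and>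
      (\<forall>i<n. \<forall>j<n. \<exists>c\<in>carrier (R\<lparr>carrier := S\<rparr>). \<forall>i'<n. \<forall>j'<n.
          (rsat (R\<lparr>carrier := S\<rparr>) ((A i')(0 := c)) \<phi> \<longleftrightarrow> i' = i) \<and>
          (rsat (R\<lparr>carrier := S\<rparr>) ((B j')(0 := c)) \<psi> \<longleftrightarrow> j' = j))" for \<phi> \<psi> n and A B :: "nat \<Rightarrow> nat \<Rightarrow> 'a"
  have ictQ: "ict2 (R\<lparr>carrier := S\<rparr>) = (\<exists>\<phi> \<psi>. \<forall>n. \<exists>A B. Q \<phi> \<psi> n A B)"
    unfolding ict2_def Q_def by (rule refl)
  obtain \<phi> \<psi> where ph: "\<forall>n. \<exists>A B. Q \<phi> \<psi> n A B"
    using ict unfolding ictQ by blast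
  define N where "N = max (mvf \<phi>) (mvf \<psi>) + 1"
  define Y where "Y = N + 1 + m"
  define P where "P x = (if x = N then p else if N < x \<and> x - N - 1 < m then fs ! (x - N - 1) else \<zero>)" for x
  define \<theta> where "\<theta> k = RExists Y (rdisj (map (\<lambda>i. REq (RVar k) (RAdd (RVar (N+1+i)) (RMul (RVar Y) (RVar N)))) [0..<m]))" for k
  have Pc: "P x \<in> carrier R" for x
  proof -
    have "fs ! (x - N - 1) \<in> carrier R" if "x - N - 1 < m"
      using that fs F'(2) Sc unfolding m_def by (metis nth_mem subsetD)
    thus ?thesis unfolding P_def using p by auto
  qed
  have \<theta>ok: "rsat R e (\<theta> k) \<longleftrightarrow> e k \<in> S"
    if k: "k < N" and eP: "\<forall>x\<ge>N. e x = P x" and ek: "e k \<in> carrier R" for e k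
  proof -
    have ev: "rsat R (e(Y := y)) (REq (RVar k) (RAdd (RVar (N+1+i)) (RMul (RVar Y) (RVar N))))
        \<longleftrightarrow> e k = fs ! i \<oplus> y \<otimes> p" if i: "i < m" for y i
    proof -
      have "e (N+1+i) = fs ! i" using eP i unfolding P_def by simp
      moreover have "e N = p" using eP unfolding P_def by simp
      moreover have "k \<noteq> Y" "N+1+i \<noteq> Y" "N \<noteq> Y" using k i unfolding Y_def by auto
      ultimately show ?thesis by simp
    qed
    let ?E = "\<lambda>i. REq (RVar k) (RAdd (RVar (N+1+i)) (RMul (RVar Y) (RVar N)))"
    have "rsat R e (\<theta> k) \<longleftrightarrow> (\<exists>y\<in>carrier R. \<exists>f\<in>set (map ?E [0..<m]). rsat R (e(Y := y)) f)"
      unfolding \<theta>_def by (simp only: rsat.simps(5) rsat_rdisj)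
    also have "\<dots> \<longleftrightarrow> (\<exists>y\<in>carrier R. \<exists>i<m. rsat R (e(Y := y)) (?E i))"
    proof
      assume "\<exists>y\<in>carrier R. \<exists>f\<in>set (map ?E [0..<m]). rsat R (e(Y := y)) f"
      then obtain y f where yf: "y \<in> carrier R" "f \<in> set (map ?E [0..<m])" "rsat R (e(Y := y)) f" by blast
      from yf(2) obtain i where i: "i < m" "f = ?E i" by auto
      show "\<exists>y\<in>carrier R. \<exists>i<m. rsat R (e(Y := y)) (?E i)"
        using yf(1,3) i by blast
    next
      assume "\<exists>y\<in>carrier R. \<exists>i<m. rsat R (e(Y := y)) (?E i)"
      then obtain y i where yi: "y \<in> carrier R" "i < m" "rsat R (e(Y := y)) (?E i)" by blast
      have "?E i \<in> set (map ?E [0..<m])" using yi(2) by simp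
      thus "\<exists>y\<in>carrier R. \<exists>f\<in>set (map ?E [0..<m]). rsat R (e(Y := y)) f"
        using yi by blast
    qed
    also have "\<dots> \<longleftrightarrow> (\<exists>y\<in>carrier R. \<exists>i<m. e k = fs ! i \<oplus> y \<otimes> p)"
      using ev by blast
    also have "\<dots> \<longleftrightarrow> (\<exists>f\<in>F'. \<exists>y\<in>carrier R. e k = f \<oplus> y \<otimes> p)"
      unfolding fs[symmetric] m_def
    proof
      assume "\<exists>y\<in>carrier R. \<exists>i<length fs. e k = fs ! i \<oplus> y \<otimes> p"
      thus "\<exists>f\<in>set fs. \<exists>y\<in>carrier R. e k = f \<oplus> y \<otimes> p" by (metis nth_mem)
    next
      assume "\<exists>f\<in>set fs. \<exists>y\<in>carrier R. e k = f \<oplus> y \<otimes> p"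
      then obtain f y where fy: "f \<in> set fs" "y \<in> carrier R" "e k = f \<oplus> y \<otimes> p" by blast
      then obtain i where "i < length fs" "fs ! i = f" by (metis in_set_conv_nth)
      thus "\<exists>y\<in>carrier R. \<exists>i<length fs. e k = fs ! i \<oplus> y \<otimes> p" using fy by blast
    qed
    also have "\<dots> \<longleftrightarrow> e k \<in> S" using Sdef ek by blast
    finally show ?thesis .
  qed
  obtain AA BB where AABB0: "\<And>n. Q \<phi> \<psi> n (AA n) (BB n)"
    using ph by metis
  note AABB = AABB0[unfolded Q_def]
  show ?thesis unfolding ict2_def
  proof (intro exI allI)
    fix n :: nat
    have AB: "(\<forall>i<n. \<forall>k. AA n i k \<in> S) \<and> (\<forall>j<n. \<forall>k. BB n j k \<in> S) \<and>
      (\<forall>i<n. \<forall>j<n. \<exists>c\<in>S. \<forall>i'<n. \<forall>j'<n.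
          (rsat (R\<lparr>carrier := S\<rparr>) ((AA n i')(0 := c)) \<phi> \<longleftrightarrow> i' = i) \<and>
          (rsat (R\<lparr>carrier := S\<rparr>) ((BB n j')(0 := c)) \<psi> \<longleftrightarrow> j' = j))"
      using AABB0[of n] unfolding Q_def by simp
    define A where "A = AA n"
    define B where "B = BB n"
    note AB = AB[folded A_def B_def]
    define A' where "A' i x = (if x < N then A i x else P x)" for i x
    define B' where "B' j x = (if x < N then B j x else P x)" for j x
    have tr: "rsat (R\<lparr>carrier := S\<rparr>) ((C i)(0 := c)) f \<longleftrightarrow> rsat R ((\<lambda>x. if x < N then C i x else P x)(0 := c)) (rrel \<theta> f)"
      if "mvf f < N" "\<forall>k. C i k \<in> S" "c \<in> S" for C i c f
    proof (rule form_sub[OF ring_axioms sub, where N = N and P = P])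
      show "\<And>e k. k < N \<Longrightarrow> \<forall>x\<ge>N. e x = P x \<Longrightarrow> e k \<in> carrier R \<Longrightarrow> rsat R e (\<theta> k) = (e k \<in> S)"
        using \<theta>ok by blast
      show "mvf f < N" by fact
      show "\<forall>x. ((C i)(0 := c)) x \<in> S" using that by simp
      show "\<forall>x<N. ((\<lambda>x. if x < N then C i x else P x)(0 := c)) x = ((C i)(0 := c)) x" by simp
      show "\<forall>x\<ge>N. ((\<lambda>x. if x < N then C i x else P x)(0 := c)) x = P x" unfolding N_def by auto
      show "\<forall>x. ((\<lambda>x. if x < N then C i x else P x)(0 := c)) x \<in> carrier R"
        using that Pc Sc by auto
    qed
    have mv: "mvf \<phi> < N" "mvf \<psi> < N" unfolding N_def by auto
    show "(\<forall>i<n. \<forall>k. A' i k \<in> carrier R) \<and> (\<forall>j<n. \<forall>k. B' j k \<in> carrier R) \<and>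
      (\<forall>i<n. \<forall>j<n. \<exists>c\<in>carrier R. \<forall>i'<n. \<forall>j'<n.
          (rsat R ((A' i')(0 := c)) (rrel \<theta> \<phi>) \<longleftrightarrow> i' = i) \<and>
          (rsat R ((B' j')(0 := c)) (rrel \<theta> \<psi>) \<longleftrightarrow> j' = j))"
    proof (intro conjI allI impI)
      show "A' i k \<in> carrier R" if "i < n" for i k using AB that Pc Sc unfolding A'_def by auto
      show "B' j k \<in> carrier R" if "j < n" for j k using AB that Pc Sc unfolding B'_def by auto
      fix i j assume ij: "i < n" "j < n"
      obtain c where c: "c \<in> S" "\<forall>i'<n. \<forall>j'<n.
          (rsat (R\<lparr>carrier := S\<rparr>) ((A i')(0 := c)) \<phi> \<longleftrightarrow> i' = i) \<and>
          (rsat (R\<lparr>carrier := S\<rparr>) ((B j')(0 := c)) \<psi> \<longleftrightarrow> j' = j)" using AB ij by blast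
      show "\<exists>c\<in>carrier R. \<forall>i'<n. \<forall>j'<n.
          (rsat R ((A' i')(0 := c)) (rrel \<theta> \<phi>) \<longleftrightarrow> i' = i) \<and>
          (rsat R ((B' j')(0 := c)) (rrel \<theta> \<psi>) \<longleftrightarrow> j' = j)"
      proof (intro bexI allI impI conjI)
        show "c \<in> carrier R" using c Sc by blast
        fix i' j' assume i'j': "i' < n" "j' < n"
        have "A' i' = (\<lambda>x. if x < N then A i' x else P x)" unfolding A'_def by simp
        thus "rsat R ((A' i')(0 := c)) (rrel \<theta> \<phi>) \<longleftrightarrow> i' = i"
          using tr[OF mv(1), of A i' c] AB i'j' c by auto
        have "B' j' = (\<lambda>x. if x < N then B j' x else P x)" unfolding B'_def by simp
        thus "rsat R ((B' j')(0 := c)) (rrel \<theta> \<psi>) \<longleftrightarrow> j' = j"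
          using tr[OF mv(2), of B j' c] AB i'j' c by auto
      qed
    qed
  qed
qed

end



lemma ideal_minus:
  assumes "ideal I R" "a \<in> I" "b \<in> I" shows "a \<ominus>\<^bsub>R\<^esub> b \<in> I"
proof -
  have A: "additive_subgroup I R" using ideal.axioms(1)[OF assms(1)] .
  show ?thesis unfolding a_minus_def
    using additive_subgroup.a_closed[OF A assms(2) additive_subgroup.a_inv_closed[OF A assms(3)]] .
qed

lemma ideal_add:
  assumes "ideal I R" "a \<in> I" "b \<in> I" shows "a \<oplus>\<^bsub>R\<^esub> b \<in> I"
  using additive_subgroup.a_closed[OF ideal.axioms(1)[OF assms(1)] assms(2,3)] .

lemma (in principal_domain) main_aux:
  assumes mxfin: "\<And>m. maximalideal m R \<Longrightarrow> finite (a_rcosets m)"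
    and inf: "infinite (carrier R)" and nict: "\<not> ict2 R"
    and sub: "subring S R" and Sfin: "finite (a_rcosets S)"
  shows "\<not> ict2 (R\<lparr>carrier := S\<rparr>) \<and> infinite S \<and> noetherian_ring (R\<lparr>carrier := S\<rparr>)"
proof -
  have Sc: "S \<subseteq> carrier R" using subringE(1)[OF sub] .
  have ftS: "fin_trans R S" using rcosets_fin_trans[OF Sc subringE(2)[OF sub] Sfin] .
  have mx: "fin_trans R m" if "maximalideal m R" for m
  proof -
    have "ideal m R" using that by (rule maximalideal.axioms(1))
    hence "m \<subseteq> carrier R" "\<zero> \<in> m" using ideal.axioms(1) additive_subgroup.a_subset
      additive_subgroup.zero_closed by blast+
    thus ?thesis using rcosets_fin_trans mxfin[OF that] by blast
  qed
  define I where "I = {r \<in> carrier R. \<forall>x\<in>carrier R. r \<otimes> x \<in> S}"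
  have I: "ideal I R" "I \<subseteq> S" "fin_trans R I" using conductor[OF sub ftS] unfolding I_def by auto
  obtain p where p: "p \<in> carrier R" "I = PIdl p" using exists_gen[OF I(1)] by blast
  have p0: "p \<noteq> \<zero>"
  proof
    assume "p = \<zero>"
    hence "I = {\<zero>}" using p unfolding cgenideal_def by (auto intro!: exI[of _ "\<zero>"])
    moreover have "infinite I" using fin_trans_infinite[OF I(3) _ inf] I(2) Sc by blast
    ultimately show False by simp
  qed
  have pI: "p \<in> I" using p cgenideal_self by blast
  have pS: "p \<in> S" using pI I(2) by blast
  obtain FI where FI: "finite FI" "FI \<subseteq> carrier R" "\<forall>r\<in>carrier R. \<exists>f\<in>FI. r \<ominus> f \<in> I"
    using I(3) unfolding fin_trans_def by blast
  have Sdef: "\<forall>x\<in>carrier R. x \<in> S \<longleftrightarrow> (\<exists>f\<in>FI \<inter> S. \<exists>y\<in>carrier R. x = f \<oplus> y \<otimes> p)"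
  proof (intro ballI iffI)
    fix x assume x: "x \<in> carrier R" "x \<in> S"
    obtain f where f: "f \<in> FI" "x \<ominus> f \<in> I" using FI(3) x by blast
    have fc: "f \<in> carrier R" using f FI(2) by blast
    have "x \<ominus> (x \<ominus> f) = f" using x(1) fc by algebra
    moreover have "x \<ominus> (x \<ominus> f) \<in> S" using subring_minus[OF sub x(2)] f(2) I(2) by blast
    ultimately have fS: "f \<in> S" by simp
    obtain y where y: "y \<in> carrier R" "x \<ominus> f = y \<otimes> p" using f(2) p(2) unfolding cgenideal_def by blast
    have "x = f \<oplus> (x \<ominus> f)" using x(1) fc by algebra
    thus "\<exists>f\<in>FI \<inter> S. \<exists>y\<in>carrier R. x = f \<oplus> y \<otimes> p" using y f(1) fS by auto
  next
    fix x assume "\<exists>f\<in>FI \<inter> S. \<exists>y\<in>carrier R. x = f \<oplus> y \<otimes> p"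
    then obtain f y where fy: "f \<in> S" "y \<in> carrier R" "x = f \<oplus> y \<otimes> p" by blast
    have "y \<otimes> p \<in> S" using fy(2) p I(2) unfolding cgenideal_def by blast
    thus "x \<in> S" using fy subringE(7)[OF sub] by simp
  qed
  have nictS: "\<not> ict2 (R\<lparr>carrier := S\<rparr>)"
    using ict2_transfer[OF sub p(1) _ _ Sdef] FI(1) nict by blast
  have infS: "infinite S" using fin_trans_infinite[OF ftS Sc inf] .
  interpret S': ring "R\<lparr>carrier := S\<rparr>" using subring_is_ring[OF sub] .
  have noeth: "noetherian_ring (R\<lparr>carrier := S\<rparr>)"
  proof (rule S'.noetherian_ringI)
    fix J assume J: "ideal J (R\<lparr>carrier := S\<rparr>)"
    have JS: "J \<subseteq> S" using ideal.axioms(1)[OF J] additive_subgroup.a_subset by fastforce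
    have Jmul: "a \<otimes> s \<in> J" if "a \<in> J" "s \<in> S" for a s
      using ideal.I_r_closed[OF J, of a s] that by simp
    have Jadd: "a \<oplus> b \<in> J" if "a \<in> J" "b \<in> J" for a b
      using ideal_add[OF J that] by simp
    show "\<exists>A\<subseteq>carrier (R\<lparr>carrier := S\<rparr>). finite A \<and> J = Idl\<^bsub>R\<lparr>carrier := S\<rparr>\<^esub> A"
    proof (cases "J \<subseteq> {\<zero>}")
      case True
      have "\<zero> \<in> J" using additive_subgroup.zero_closed[OF ideal.axioms(1)[OF J]] by simp
      hence "J = {\<zero>}" using True by blast
      moreover have "Idl\<^bsub>R\<lparr>carrier := S\<rparr>\<^esub> {\<zero>} = {\<zero>}" using S'.genideal_zero by simp
      ultimately show ?thesis using subringE(2)[OF sub] by auto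
    next
      case False
      then obtain a where a: "a \<in> J" "a \<noteq> \<zero>" by blast
      have ac: "a \<in> carrier R" using a JS Sc by blast
      define q where "q = a \<otimes> p"
      have qc: "q \<in> carrier R" using ac p unfolding q_def by simp
      have q0: "q \<noteq> \<zero>" using ac p p0 a(2) integral unfolding q_def by blast
      have qJ: "q \<otimes> t \<in> J" if "t \<in> carrier R" for t
      proof -
        have "p \<otimes> t \<in> I" using ideal.I_r_closed[OF I(1) pI that] .
        hence "a \<otimes> (p \<otimes> t) \<in> J" using Jmul a(1) I(2) by blast
        thus ?thesis using ac p that unfolding q_def by (simp add: m_assoc)
      qed
      obtain FK where FK: "finite FK" "FK \<subseteq> carrier R" "\<forall>r\<in>carrier R. \<exists>f\<in>FK. r \<ominus> f \<in> PIdl q"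
        using fin_trans_PIdl[OF mx qc q0] unfolding fin_trans_def by blast
      obtain T where T: "finite T" "T \<subseteq> carrier R" "\<forall>r\<in>carrier R. \<exists>f\<in>T. r \<ominus> f \<in> S"
        using ftS unfolding fin_trans_def by blast
      define ch where "ch f = (SOME j. j \<in> J \<and> j \<ominus> f \<in> PIdl q)" for f
      define A0 where "A0 = (\<lambda>t. q \<otimes> t) ` (insert \<one> T)"
      define A1 where "A1 = ch ` {f \<in> FK. \<exists>j\<in>J. j \<ominus> f \<in> PIdl q}"
      have ch: "ch f \<in> J \<and> ch f \<ominus> f \<in> PIdl q" if "\<exists>j\<in>J. j \<ominus> f \<in> PIdl q" for f
      proof -
        have "\<exists>j. j \<in> J \<and> j \<ominus> f \<in> PIdl q" using that by blast
        from someI_ex[OF this] show ?thesis unfolding ch_def .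
      qed
      have A0J: "A0 \<subseteq> J" unfolding A0_def using qJ T(2) by auto
      have A1J: "A1 \<subseteq> J" unfolding A1_def using ch by auto
      have finA: "finite (A0 \<union> A1)" unfolding A0_def A1_def using T(1) FK(1) by simp
      have AS: "A0 \<union> A1 \<subseteq> S" using A0J A1J JS by blast
      let ?Id = "Idl\<^bsub>R\<lparr>carrier := S\<rparr>\<^esub> (A0 \<union> A1)"
      have Id: "ideal ?Id (R\<lparr>carrier := S\<rparr>)" using S'.genideal_ideal[of "A0 \<union> A1"] AS by simp
      have AId: "A0 \<union> A1 \<subseteq> ?Id" using S'.genideal_self[of "A0 \<union> A1"] AS by simp
      have IdS: "?Id \<subseteq> S" using ideal.axioms(1)[OF Id] additive_subgroup.a_subset by fastforce
      have Idadd: "x \<oplus> y \<in> ?Id" if "x \<in> ?Id" "y \<in> ?Id" for x y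
        using ideal_add[OF Id that] by simp
      have Idmul: "x \<otimes> s \<in> ?Id" if "x \<in> ?Id" "s \<in> S" for x s
        using ideal.I_r_closed[OF Id, of x s] that by simp
      have PId: "PIdl q \<subseteq> ?Id"
      proof
        fix z assume "z \<in> PIdl q"
        then obtain y where y: "y \<in> carrier R" "z = y \<otimes> q" unfolding cgenideal_def by blast
        obtain t where t: "t \<in> T" "y \<ominus> t \<in> S" using T(3) y(1) by blast
        have tc: "t \<in> carrier R" using t T(2) by blast
        have "z = q \<otimes> t \<oplus> (q \<otimes> \<one>) \<otimes> (y \<ominus> t)" using y tc qc by algebra
        moreover have "q \<otimes> t \<in> ?Id" "q \<otimes> \<one> \<in> ?Id" using AId t(1) unfolding A0_def by auto
        ultimately show "z \<in> ?Id" using Idadd Idmul t(2) by simp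
      qed
      have "J = ?Id"
      proof
        show "?Id \<subseteq> J" using S'.genideal_minimal[OF J] A0J A1J by blast
        show "J \<subseteq> ?Id"
        proof
          fix x assume x: "x \<in> J"
          have xc: "x \<in> carrier R" using x JS Sc by blast
          obtain f where f: "f \<in> FK" "x \<ominus> f \<in> PIdl q" using FK(3) xc by blast
          have fc: "f \<in> carrier R" using f FK(2) by blast
          have ex: "\<exists>j\<in>J. j \<ominus> f \<in> PIdl q" using x f by blast
          have jA: "ch f \<in> ?Id" using AId f(1) ex unfolding A1_def by blast
          have jc: "ch f \<in> carrier R" using ch[OF ex] JS Sc by blast
          have PI: "ideal (PIdl q) R" using cgenideal_ideal[OF qc] .
          have "(x \<ominus> f) \<ominus> (ch f \<ominus> f) \<in> PIdl q" using ideal_minus[OF PI f(2)] ch[OF ex] by blast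
          moreover have "(x \<ominus> f) \<ominus> (ch f \<ominus> f) = x \<ominus> ch f" using xc fc jc by algebra
          ultimately have "x \<ominus> ch f \<in> ?Id" using PId by auto
          moreover have "x = ch f \<oplus> (x \<ominus> ch f)" using xc jc by algebra
          ultimately show "x \<in> ?Id" using Idadd jA by metis
        qed
      qed
      thus ?thesis using finA AS by (intro exI[of _ "A0 \<union> A1"]) simp
    qed
  qed
  show ?thesis using noeth nictS infS by simp
qed


theorem lemma8p7:
  fixes R :: "('a, 'b) ring_scheme" and S :: "'a set"
  assumes "mixed_char_DVR R" and "dp_minimal R" and "finite_index_subring S R"
  shows "dp_minimal (R\<lparr>carrier := S\<rparr>) \<and> noetherian_ring (R\<lparr>carrier := S\<rparr>)"
proof -
  have pd: "principal_domain R" using assms(1) unfolding mixed_char_DVR_def DVR_def by blast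
  have mxfin: "\<And>m. maximalideal m R \<Longrightarrow> finite (a_rcosets\<^bsub>R\<^esub> m)"
    using assms(1) unfolding mixed_char_DVR_def by blast
  have inf: "infinite (carrier R)" and nict: "\<not> ict2 R" using assms(2) unfolding dp_minimal_def by auto
  have sub: "subring S R" and Sfin: "finite (a_rcosets\<^bsub>R\<^esub> S)"
    using assms(3) unfolding finite_index_subring_def by auto
  show ?thesis using principal_domain.main_aux[OF pd mxfin inf nict sub Sfin] unfolding dp_minimal_def by simp
qed


end
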